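(* Let $D$ be a positive integer that is not a sum of two integer squares, and let $\mathcal{C}$ be one of the following circles: $\mathcal{C}_D: |z|^2-D=0$; $\mathcal{C}_{D,1}: 2|z|^2+z+\bar z-\frac{D-1}{2}=0$ (when $D\equiv1\pmod4$); $\mathcal{C}_{D,2}: 2|z|^2+iz-i\bar z-\frac{D-1}{2}=0$ (when $D\equiv1\pmod4$); $\mathcal{C}_{D,3}: 2|z|^2+(1+i)z+(1-i)\bar z-\frac{D-2}{2}=0$ (when $D\equiv2\pmod4$). Then the image of $\mathcal{C}$ under $z\mapsto z+1$ (i.e. under $\begin{pmatrix}1&1\\0&1\end{pmatrix}$) intersects $\mathcal{C}$ nontrivially.
   Context: "Intersect nontrivially" means the two circles cross, i.e. meet in exactly two points. *)

theory Defs
  imports "HOL-Analysis.Analysis"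
begin

definition sum_two_squares :: "int \<Rightarrow> bool" where
  "sum_two_squares n \<longleftrightarrow> (\<exists>a b :: int. n = a\<^sup>2 + b\<^sup>2)"

definition circD :: "int \<Rightarrow> complex set" where
  "circD D = {z. z * cnj z - of_int D = 0}"

definition circD1 :: "int \<Rightarrow> complex set" where
  "circD1 D = {z. 2 * (z * cnj z) + z + cnj z - of_int (D - 1) / 2 = 0}"

definition circD2 :: "int \<Rightarrow> complex set" where
  "circD2 D = {z. 2 * (z * cnj z) + \<i> * z - \<i> * cnj z - of_int (D - 1) / 2 = 0}"

definition circD3 :: "int \<Rightarrow> complex set" where
  "circD3 D = {z. 2 * (z * cnj z) + (1 + \<i>) * z + (1 - \<i>) * cnj z - of_int (D - 2) / 2 = 0}"

definition intersect_nontrivially :: "complex set \<Rightarrow> complex set \<Rightarrow> bool" where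
  "intersect_nontrivially A B \<longleftrightarrow> card (A \<inter> B) = 2"

end

theory Submission
  imports Defs
begin

lemma normsq_eq: "(w * cnj w = complex_of_real R) \<longleftrightarrow> (Re w)^2 + (Im w)^2 = R"
  by (simp add: complex_eq_iff power2_eq_square)

lemma key:
  fixes c :: complex and R :: real
  assumes R: "R > 1/4"
  defines "S \<equiv> {z. (z - c) * cnj (z - c) = complex_of_real R}"
  shows "card ((\<lambda>z. z + 1) ` S \<inter> S) = 2"
proof -
  define s where "s = sqrt (R - 1/4)"
  have s: "s > 0" "s^2 = R - 1/4" using R by (auto simp: s_def)
  define a where "a = c + Complex (1/2) s"
  define b where "b = c + Complex (1/2) (-s)"
  have img: "x \<in> (\<lambda>z. z + 1) ` A \<longleftrightarrow> x - 1 \<in> A" for x and A :: "complex set"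
    by (auto simp: image_iff intro!: bexI[of _ "x - 1"])
  have "(\<lambda>z. z + 1) ` S \<inter> S = {a, b}"
  proof (intro set_eqI iffI)
    fix z assume "z \<in> (\<lambda>z. z + 1) ` S \<inter> S"
    then have m1: "z - 1 \<in> S" and m2: "z \<in> S" by (auto simp: img)
    from m2 have h1: "(Re (z - c))^2 + (Im (z - c))^2 = R"
      by (simp only: S_def mem_Collect_eq normsq_eq)
    from m1 have "(Re (z - 1 - c))^2 + (Im (z - 1 - c))^2 = R"
      by (simp only: S_def mem_Collect_eq normsq_eq)
    then have h2: "(Re (z - c) - 1)^2 + (Im (z - c))^2 = R" by (simp add: algebra_simps)
    have re: "Re (z - c) = 1/2" using h1 h2 by (simp add: power2_eq_square algebra_simps)
    then have "(Re (z - c))^2 = 1/4" unfolding re by (simp add: power2_eq_square)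
    then have "(Im (z - c))^2 = s^2" using h1 s by linarith
    then have "Im (z - c) = s \<or> Im (z - c) = -s"
      using power2_eq_iff by blast
    then show "z \<in> {a, b}" using re
      by (auto simp: a_def b_def complex_eq_iff)
  next
    fix z assume "z \<in> {a, b}"
    then show "z \<in> (\<lambda>z. z + 1) ` S \<inter> S"
      using s by (auto simp: img S_def normsq_eq a_def b_def power2_eq_square
        simp del: complex_cnj_diff; simp add: algebra_simps)
  qed
  moreover have "a \<noteq> b" using s by (simp add: a_def b_def)
  ultimately show ?thesis by simp
qed

lemma e0: "circD D = {z. (z - 0) * cnj (z - 0) = complex_of_real (real_of_int D)}"
  unfolding circD_def by (auto simp: complex_eq_iff)

lemma e1: "circD1 D = {z. (z - (-1/2)) * cnj (z - (-1/2)) = complex_of_real (real_of_int D / 4)}"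
  unfolding circD1_def by (auto simp: complex_eq_iff field_simps)

lemma e2: "circD2 D = {z. (z - \<i>/2) * cnj (z - \<i>/2) = complex_of_real (real_of_int D / 4)}"
  unfolding circD2_def by (auto simp: complex_eq_iff field_simps)

lemma e3: "circD3 D = {z. (z - Complex (-1/2) (1/2)) * cnj (z - Complex (-1/2) (1/2)) = complex_of_real (real_of_int D / 4)}"
  unfolding circD3_def by (auto simp: complex_eq_iff field_simps)

theorem lemma7p3:
  fixes D :: int
  assumes "D > 0" and "\<not> sum_two_squares D"
  shows "intersect_nontrivially ((\<lambda>z. z + 1) ` circD D) (circD D)
    \<and> (D mod 4 = 1 \<longrightarrow> intersect_nontrivially ((\<lambda>z. z + 1) ` circD1 D) (circD1 D))
    \<and> (D mod 4 = 1 \<longrightarrow> intersect_nontrivially ((\<lambda>z. z + 1) ` circD2 D) (circD2 D))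
    \<and> (D mod 4 = 2 \<longrightarrow> intersect_nontrivially ((\<lambda>z. z + 1) ` circD3 D) (circD3 D))"
proof -
  have "D \<noteq> 1" using assms(2) unfolding sum_two_squares_def
    by (metis add.right_neutral one_power2 zero_power2)
  then have "D \<ge> 2" using assms(1) by linarith
  then have R1: "real_of_int D > 1/4" and R2: "real_of_int D / 4 > 1/4" by auto
  show ?thesis unfolding intersect_nontrivially_def e0 e1 e2 e3
    using key[OF R1] key[OF R2] by blast
qed

end
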